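(* Let $p,q,r,s\in\mathrm{baxt}_\infty$ with $\mathrm{ev}(p)=\mathrm{ev}(q)\leqslant\mathrm{ev}(r)$ and $\mathrm{ev}(p)=\mathrm{ev}(q)\leqslant\mathrm{ev}(s)$. Then $spr=sqr$ in $\mathrm{baxt}_\infty$.
   Context: Let $\mathcal{A}=\{1<2<3<\cdots\}$. Right strict binary search tree: labelled rooted binary tree in which each node's label is $\ge$ every label in its left subtree and $<$ every label in its right subtree; inserting $a$: if empty create node $a$, else with root label $x$ insert into right subtree if $a>x$, left subtree otherwise. $\mathrm{P}_{\mathrm{sylv}}(w_1\cdots w_k)$ is obtained from the empty tree by inserting $w_k,\dots,w_1$ in this order. Left strict binary search tree: each node's label is $>$ every label in its left subtree and $\le$ every label in its right subtree; inserting $a$: if empty create node $a$, else with root label $x$ insert into left subtree if $a<x$, right subtree otherwise. $\mathrm{P}^\sharp(w_1\cdots w_k)$ is obtained from the empty tree by inserting $w_1,\dots,w_k$ in this order. Set $\mathrm{P}_{\mathrm{baxt}}(w)=(\mathrm{P}^\sharp(w),\mathrm{P}_{\mathrm{sylv}}(w))$. The Baxter monoid $\mathrm{baxt}_\infty$ is $\mathcal{A}^*/{\equiv}$ with $u\equiv v\iff\mathrm{P}_{\mathrm{baxt}}(u)=\mathrm{P}_{\mathrm{baxt}}(v)$ (a congruence). The evaluation $\mathrm{ev}(u)$ is the tuple $(|u|_a)_{a\in\mathcal{A}}$ of numbers of occurrences of each symbol; it is constant on congruence classes, and $\mathrm{ev}(u)\leqslant\mathrm{ev}(v)$ means $|u|_a\le|v|_a$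 for all $a$. *)

theory Defs
  imports "HOL-Library.Tree"
begin

text \<open>Words over the alphabet 1 < 2 < 3 < ... are lists of positive naturals.\<close>

fun ins_right :: "nat \<Rightarrow> nat tree \<Rightarrow> nat tree" where
  "ins_right a Leaf = Node Leaf a Leaf"
| "ins_right a (Node l x r) =
     (if a > x then Node l x (ins_right a r) else Node (ins_right a l) x r)"

fun ins_left :: "nat \<Rightarrow> nat tree \<Rightarrow> nat tree" where
  "ins_left a Leaf = Node Leaf a Leaf"
| "ins_left a (Node l x r) =
     (if a < x then Node (ins_left a l) x r else Node l x (ins_left a r))"

definition P_sylv :: "nat list \<Rightarrow> nat tree" where
  "P_sylv w = fold ins_right (rev w) Leaf"

definition P_sharp :: "nat list \<Rightarrow> nat tree" where
  "P_sharp w = fold ins_left w Leaf"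

definition P_baxt :: "nat list \<Rightarrow> nat tree \<times> nat tree" where
  "P_baxt w = (P_sharp w, P_sylv w)"

text \<open>Baxter congruence: equality in baxt_infinity.\<close>
definition baxt_equiv :: "nat list \<Rightarrow> nat list \<Rightarrow> bool" where
  "baxt_equiv u v \<longleftrightarrow> P_baxt u = P_baxt v"

definition ev :: "nat list \<Rightarrow> nat \<Rightarrow> nat" where
  "ev w a = count_list w a"

end

theory Submission
  imports Defs "HOL-Library.Multiset"
begin

fun invL :: "nat tree \<Rightarrow> bool" where
  "invL Leaf = True"
| "invL (Node l x r) = (invL l \<and> invL r \<and> (\<forall>y\<in>set_tree l. y < x) \<and> (\<forall>y\<in>set_tree r. x \<le> y))"

fun invR :: "nat tree \<Rightarrow> bool" where
  "invR Leaf = True"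
| "invR (Node l x r) = (invR l \<and> invR r \<and> (\<forall>y\<in>set_tree l. y \<le> x) \<and> (\<forall>y\<in>set_tree r. x < y))"

lemma set_insL[simp]: "set_tree (ins_left a T) = insert a (set_tree T)"
  by (induction T) auto

lemma set_insR[simp]: "set_tree (ins_right a T) = insert a (set_tree T)"
  by (induction T) auto

lemma invL_ins: "invL T \<Longrightarrow> invL (ins_left a T)"
  by (induction T) auto

lemma invR_ins: "invR T \<Longrightarrow> invR (ins_right a T)"
  by (induction T) auto

lemma commL0: "invL T \<Longrightarrow> a < b \<Longrightarrow> b \<in> set_tree T \<Longrightarrow>
   ins_left a (ins_left b T) = ins_left b (ins_left a T)"
proof (induction T)
  case Leaf then show ?case by simp
next
  case (Node l x r)
  show ?case
  proof (cases "b < x")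
    case True
    then have "b \<in> set_tree l" using Node.prems by auto
    then show ?thesis using Node True by auto
  next
    case False
    show ?thesis
    proof (cases "x \<le> a")
      case True
      have "b \<in> set_tree r" using Node.prems True False by auto
      then show ?thesis using Node True False by auto
    qed (use False in auto)
  qed
qed

lemma commR0: "invR T \<Longrightarrow> a < b \<Longrightarrow> a \<in> set_tree T \<Longrightarrow>
   ins_right a (ins_right b T) = ins_right b (ins_right a T)"
proof (induction T)
  case Leaf then show ?case by simp
next
  case (Node l x r)
  show ?case
  proof (cases "x < a")
    case True
    then have "a \<in> set_tree r" using Node.prems by auto
    then show ?thesis using Node True by auto
  next
    case False
    show ?thesis
    proof (cases "b \<le> x")
      case True
      have "a \<in> set_tree l" using Node.prems True False by auto
      then show ?thesis using Node True False by auto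
    qed (use False in auto)
  qed
qed

lemma commL: "invL T \<Longrightarrow> a \<in> set_tree T \<Longrightarrow> b \<in> set_tree T \<Longrightarrow>
   ins_left a (ins_left b T) = ins_left b (ins_left a T)"
  by (metis commL0 linorder_neqE_nat)

lemma commR: "invR T \<Longrightarrow> a \<in> set_tree T \<Longrightarrow> b \<in> set_tree T \<Longrightarrow>
   ins_right a (ins_right b T) = ins_right b (ins_right a T)"
  by (metis commR0 linorder_neqE_nat)

lemma move_front:
  assumes comm: "\<And>T a b. I T \<Longrightarrow> a \<in> S T \<Longrightarrow> b \<in> S T \<Longrightarrow> ins a (ins b T) = ins b (ins a T)"
    and pres: "\<And>T a. I T \<Longrightarrow> I (ins a T)"
    and st: "\<And>T a. S (ins a T) = insert a (S T)"
  shows "I T \<Longrightarrow> a \<in> S T \<Longrightarrow> set xs \<subseteq> S T \<Longrightarrow> ins a (fold ins xs T) = fold ins xs (ins a T)"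
proof (induction xs arbitrary: T)
  case Nil then show ?case by simp
next
  case (Cons x xs)
  have "ins a (fold ins (x # xs) T) = ins a (fold ins xs (ins x T))" by simp
  also have "\<dots> = fold ins xs (ins a (ins x T))"
  proof -
    have "I (ins x T)" "a \<in> S (ins x T)" "set xs \<subseteq> S (ins x T)"
      using Cons.prems pres st by auto
    then show ?thesis using Cons.IH[of "ins x T"] by blast
  qed
  also have "ins a (ins x T) = ins x (ins a T)" using comm Cons.prems by auto
  finally show ?case by simp
qed

lemma perm_fold:
  assumes comm: "\<And>T a b. I T \<Longrightarrow> a \<in> S T \<Longrightarrow> b \<in> S T \<Longrightarrow> ins a (ins b T) = ins b (ins a T)"
    and pres: "\<And>T a. I T \<Longrightarrow> I (ins a T)"
    and st: "\<And>T a. S (ins a T) = insert a (S T)"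
  shows "I T \<Longrightarrow> set p \<subseteq> S T \<Longrightarrow> mset p = mset q \<Longrightarrow> fold ins p T = fold ins q T"
proof (induction p arbitrary: q T)
  case Nil then show ?case by simp
next
  case (Cons a p)
  have "a \<in> set q" using Cons.prems(3) by (metis list.set_intros(1) set_mset_mset)
  then obtain q1 q2 where q: "q = q1 @ a # q2" by (meson split_list)
  have sq: "set q = set (a # p)" using Cons.prems(3) by (metis set_mset_mset)
  have "fold ins (a # p) T = fold ins p (ins a T)" by simp
  also have "\<dots> = fold ins (q1 @ q2) (ins a T)"
  proof -
    have "I (ins a T)" "set p \<subseteq> S (ins a T)" "mset p = mset (q1 @ q2)"
      using Cons.prems pres st q by auto
    then show ?thesis using Cons.IH[of "ins a T" "q1 @ q2"] by blast
  qed
  also have "\<dots> = fold ins q2 (fold ins q1 (ins a T))" by simp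
  also have "fold ins q1 (ins a T) = ins a (fold ins q1 T)"
  proof -
    have "set q1 \<subseteq> S T" using Cons.prems sq q by auto
    then show ?thesis
      using move_front[where I=I and S=S and ins=ins, OF comm pres st, of T a q1] Cons.prems by simp
  qed
  finally show ?case using q by simp
qed

theorem lemma4p8:
  fixes p q r s :: "nat list"
  assumes "\<forall>a\<in>set p. 0 < a" and "\<forall>a\<in>set q. 0 < a"
      and "\<forall>a\<in>set r. 0 < a" and "\<forall>a\<in>set s. 0 < a"
      and "ev p = ev q" and "ev q \<le> ev r" and "ev q \<le> ev s"
  shows "baxt_equiv (s @ p @ r) (s @ q @ r)"
proof -
  have m: "mset p = mset q"
    using assms(5) unfolding ev_def by (metis count_mset multiset_eqI)
  have sub: "set q \<subseteq> set x" if "ev q \<le> ev x" for x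
  proof
    fix a assume "a \<in> set q"
    then have "0 < count_list q a" by (metis count_list_0_iff gr0I)
    also have "count_list q a \<le> count_list x a" using that unfolding ev_def le_fun_def by blast
    finally show "a \<in> set x" by (metis count_list_0_iff less_irrefl)
  qed
  have sp: "set p = set q" using m by (metis set_mset_mset)
  have invL0: "invL (fold ins_left xs T)" if "invL T" for xs T
    using that by (induction xs arbitrary: T) (auto simp: invL_ins)
  have invR0: "invR (fold ins_right xs T)" if "invR T" for xs T
    using that by (induction xs arbitrary: T) (auto simp: invR_ins)
  have stL: "set_tree (fold ins_left xs T) = set xs \<union> set_tree T" for xs T
    by (induction xs arbitrary: T) auto
  have stR: "set_tree (fold ins_right xs T) = set xs \<union> set_tree T" for xs T
    by (induction xs arbitrary: T) auto
  have L: "fold ins_left p (fold ins_left s Leaf) = fold ins_left q (fold ins_left s Leaf)"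
    apply (rule perm_fold[where I=invL and S=set_tree])
    using commL invL_ins invL0 stL sub[OF assms(7)] sp m by auto
  have R: "fold ins_right (rev p) (fold ins_right (rev r) Leaf) = fold ins_right (rev q) (fold ins_right (rev r) Leaf)"
    apply (rule perm_fold[where I=invR and S=set_tree])
    using commR invR_ins invR0 stR sub[OF assms(6)] sp m by auto
  show ?thesis
    unfolding baxt_equiv_def P_baxt_def P_sharp_def P_sylv_def
    using L R by simp
qed

end
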